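(* Let $v\ge2$ and $M,N\in{\cal I}_v$. Write $N=N_1+N_2$ with $N_1=\beta M$, $N_2\perp M$, and $M=M_1+M_2$ with $M_1=\alpha N$, $M_2\perp N$, where $\alpha,\beta\in\mathbb R$ and orthogonality is with respect to $(x,y)=\mathrm{Re}(xy^* )$. Then $\{e^M,e^N\}=0$ if and only if either ($|N_2|=\pi/2+\pi l$, $N_1=0$ and $|M|=\pi/2+\pi k$) or ($|M_2|=\pi/2+\pi k$, $M_1=0$ and $|N|=\pi/2+\pi l$) for some integers $l,k\ge0$.
   Context: ${\cal A}_v$ is the real Cayley-Dickson algebra of dimension $2^v$, $z^*$ its conjugation, $\mathrm{Re}(z)=(z+z^* )/2$, $|z|=(zz^* )^{1/2}$, ${\cal I}_v=\{z:\mathrm{Re}(z)=0\}$. For $M\in{\cal I}_v$, $e^M=\cos|M|+\frac{\sin|M|}{|M|}M$. $\{a,b\}:=ab+ba$. *)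

theory Defs
  imports Complex_Main
begin

text \<open>Real Cayley-Dickson algebra A_v of dimension 2^v. Elements are represented as
  coordinate functions nat => real supported on {0..<2^v}; coordinate 0 is the real part.
  Doubling rule: (a,b)(c,d) = (ac - d* b, da + b c*), (a,b)* = (a*, -b).\<close>

definition cd_elems :: "nat \<Rightarrow> (nat \<Rightarrow> real) set" where
  "cd_elems v = {x. \<forall>i\<ge>2^v. x i = 0}"

definition cd_imag :: "nat \<Rightarrow> (nat \<Rightarrow> real) set" where
  "cd_imag v = {x \<in> cd_elems v. x 0 = 0}"

definition cd_conj :: "nat \<Rightarrow> (nat \<Rightarrow> real) \<Rightarrow> nat \<Rightarrow> real" where
  "cd_conj v x = (\<lambda>i. if i = 0 then x 0 else if i < 2^v then - x i else 0)"

definition cd_lo :: "nat \<Rightarrow> (nat \<Rightarrow> real) \<Rightarrow> nat \<Rightarrow> real" where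
  "cd_lo n x = (\<lambda>i. if i < n then x i else 0)"

definition cd_hi :: "nat \<Rightarrow> (nat \<Rightarrow> real) \<Rightarrow> nat \<Rightarrow> real" where
  "cd_hi n x = (\<lambda>i. if i < n then x (i + n) else 0)"

definition cd_pair :: "nat \<Rightarrow> (nat \<Rightarrow> real) \<Rightarrow> (nat \<Rightarrow> real) \<Rightarrow> nat \<Rightarrow> real" where
  "cd_pair n a b = (\<lambda>i. if i < n then a i else if i < 2 * n then b (i - n) else 0)"

fun cd_mult :: "nat \<Rightarrow> (nat \<Rightarrow> real) \<Rightarrow> (nat \<Rightarrow> real) \<Rightarrow> nat \<Rightarrow> real" where
  "cd_mult 0 x y = (\<lambda>i. if i = 0 then x 0 * y 0 else 0)"
| "cd_mult (Suc v) x y =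
     (let n = 2^v; a = cd_lo n x; b = cd_hi n x; c = cd_lo n y; d = cd_hi n y;
          p = cd_mult v a c; q = cd_mult v (cd_conj v d) b;
          r = cd_mult v d a; s = cd_mult v b (cd_conj v c)
      in cd_pair n (\<lambda>i. p i - q i) (\<lambda>i. r i + s i))"

definition cd_norm :: "nat \<Rightarrow> (nat \<Rightarrow> real) \<Rightarrow> real" where
  "cd_norm v z = sqrt (cd_mult v z (cd_conj v z) 0)"

definition cd_inner :: "nat \<Rightarrow> (nat \<Rightarrow> real) \<Rightarrow> (nat \<Rightarrow> real) \<Rightarrow> real" where
  "cd_inner v x y = cd_mult v x (cd_conj v y) 0"

text \<open>e^M = cos|M| + (sin|M|/|M|) M  (for M = 0 this gives 1).\<close>
definition cd_exp :: "nat \<Rightarrow> (nat \<Rightarrow> real) \<Rightarrow> nat \<Rightarrow> real" where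
  "cd_exp v M = (\<lambda>i. (if i = 0 then cos (cd_norm v M) else 0)
                     + sin (cd_norm v M) / cd_norm v M * M i)"

definition cd_anticomm :: "nat \<Rightarrow> (nat \<Rightarrow> real) \<Rightarrow> (nat \<Rightarrow> real) \<Rightarrow> nat \<Rightarrow> real" where
  "cd_anticomm v a b = (\<lambda>i. cd_mult v a b i + cd_mult v b a i)"

end

theory Submission imports Defs begin

definition cd_one :: "nat \<Rightarrow> real" where "cd_one = (\<lambda>i. if i = 0 then 1 else 0)"
definition sqs :: "nat \<Rightarrow> (nat \<Rightarrow> real) \<Rightarrow> real" where "sqs v x = (\<Sum>i<2^v. x i * x i)"
definition ips :: "nat \<Rightarrow> (nat \<Rightarrow> real) \<Rightarrow> (nat \<Rightarrow> real) \<Rightarrow> real" where "ips v x y = (\<Sum>i<2^v. x i * y i)"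

lemma lo_lin: "cd_lo n (\<lambda>i. a * x i + b * y i) = (\<lambda>i. a * cd_lo n x i + b * cd_lo n y i)"
  by (auto simp: cd_lo_def)
lemma hi_lin: "cd_hi n (\<lambda>i. a * x i + b * y i) = (\<lambda>i. a * cd_hi n x i + b * cd_hi n y i)"
  by (auto simp: cd_hi_def)
lemma conj_lin: "cd_conj v (\<lambda>i. a * x i + b * y i) = (\<lambda>i. a * cd_conj v x i + b * cd_conj v y i)"
  by (auto simp: cd_conj_def)

lemma mult_lin:
  "cd_mult v (\<lambda>i. a * x i + b * y i) z = (\<lambda>i. a * cd_mult v x z i + b * cd_mult v y z i) \<and>
   cd_mult v z (\<lambda>i. a * x i + b * y i) = (\<lambda>i. a * cd_mult v z x i + b * cd_mult v z y i)"
proof (induction v arbitrary: a b x y z)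
  case 0
  then show ?case by (auto simp: algebra_simps)
next
  case (Suc v)
  show ?case
    by (simp add: Let_def lo_lin hi_lin conj_lin Suc.IH, intro conjI ext)
       (auto simp: cd_pair_def algebra_simps)
qed

lemma mult_addL: "cd_mult v (\<lambda>i. x i + y i) z = (\<lambda>i. cd_mult v x z i + cd_mult v y z i)"
  using mult_lin[of v 1 x 1 y z] by simp
lemma mult_addR: "cd_mult v z (\<lambda>i. x i + y i) = (\<lambda>i. cd_mult v z x i + cd_mult v z y i)"
  using mult_lin[of v 1 x 1 y z] by simp
lemma mult_scL: "cd_mult v (\<lambda>i. a * x i) z = (\<lambda>i. a * cd_mult v x z i)"
  using mult_lin[of v a x 0 x z] by simp
lemma mult_scR: "cd_mult v z (\<lambda>i. a * x i) = (\<lambda>i. a * cd_mult v z x i)"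
  using mult_lin[of v a x 0 x z] by simp
lemma mult_negL: "cd_mult v (\<lambda>i. - x i) z = (\<lambda>i. - cd_mult v x z i)"
  using mult_scL[of v "-1" x z] by simp
lemma mult_negR: "cd_mult v z (\<lambda>i. - x i) = (\<lambda>i. - cd_mult v z x i)"
  using mult_scR[of v z "-1" x] by simp
lemma mult_0L: "cd_mult v (\<lambda>i. 0) z = (\<lambda>i. 0)"
  using mult_scL[of v 0 z z] by simp
lemma mult_0R: "cd_mult v z (\<lambda>i. 0) = (\<lambda>i. 0)"
  using mult_scR[of v z 0 z] by simp
lemma conj_neg: "cd_conj v (\<lambda>i. - x i) = (\<lambda>i. - cd_conj v x i)"
  by (auto simp: cd_conj_def)

lemma sum_split2: "(\<Sum>i<(n::nat)+m. f i) = (\<Sum>i<n. f i) + (\<Sum>i<m. f (i + n)::real)"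
  by (induction m) (auto simp: add.commute)

lemma conj_sum: "(\<Sum>i<2^v. cd_conj v d i * b i) = 2 * d 0 * b 0 - (\<Sum>i<2^v. d i * b i)"
proof -
  have "(\<Sum>i<2^v. cd_conj v d i * b i) = (\<Sum>i<(2::nat)^v. (if i = 0 then 2 * d 0 * b 0 else 0) - d i * b i)"
    by (rule sum.cong) (auto simp: cd_conj_def)
  also have "\<dots> = 2 * d 0 * b 0 - (\<Sum>i<2^v. d i * b i)"
    by (simp add: sum_subtractf)
  finally show ?thesis .
qed

lemma mult_re: "cd_mult v x y 0 = 2 * x 0 * y 0 - (\<Sum>i<2^v. x i * y i)"
proof (induction v arbitrary: x y)
  case 0
  then show ?case by simp
next
  case (Suc v)
  define n where "n = (2::nat)^v"
  have n: "0 < n" by (simp add: n_def)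
  have "cd_mult (Suc v) x y 0 = cd_mult v (cd_lo n x) (cd_lo n y) 0
      - cd_mult v (cd_conj v (cd_hi n y)) (cd_hi n x) 0"
    using n by (simp add: Let_def cd_pair_def n_def)
  also have "\<dots> = 2 * x 0 * y 0 - (\<Sum>i<n. x i * y i) - (\<Sum>i<n. x (i+n) * y (i+n))"
    unfolding Suc.IH conj_sum
    using n unfolding n_def[symmetric] by (simp add: cd_lo_def cd_hi_def cd_conj_def mult.commute)
  also have "\<dots> = 2 * x 0 * y 0 - (\<Sum>i<2^Suc v. x i * y i)"
  proof -
    have e: "(2::nat)^Suc v = 2^v + 2^v" by simp
    show ?thesis unfolding e sum_split2 n_def by simp
  qed
  finally show ?case .
qed

lemma conj_conj: "(\<And>i. i \<ge> 2^v \<Longrightarrow> x i = 0) \<Longrightarrow> cd_conj v (cd_conj v x) = x"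
  by (auto simp: cd_conj_def fun_eq_iff)

lemma lo_conj: "cd_lo (2^v) (cd_conj (Suc v) x) = cd_conj v (cd_lo (2^v) x)"
  by (auto simp: cd_lo_def cd_conj_def fun_eq_iff)
lemma hi_conj: "cd_hi (2^v) (cd_conj (Suc v) x) = (\<lambda>i. - cd_hi (2^v) x i)"
  by (auto simp: cd_hi_def cd_conj_def fun_eq_iff)

lemma sqs_conj: "sqs v (cd_conj v x) = sqs v x"
  unfolding sqs_def by (rule sum.cong) (auto simp: cd_conj_def)

lemma mult_conj: "cd_mult v x (cd_conj v x) = (\<lambda>i. if i = 0 then sqs v x else 0)"
proof (induction v arbitrary: x)
  case 0
  then show ?case by (auto simp: sqs_def cd_conj_def)
next
  case (Suc v)
  define n where "n = (2::nat)^v"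
  have n: "0 < n" by (simp add: n_def)
  define a where "a = cd_lo n x"
  define b where "b = cd_hi n x"
  have bs: "\<And>i. i \<ge> 2^v \<Longrightarrow> b i = 0" by (simp add: b_def cd_hi_def n_def)
  have as: "\<And>i. i \<ge> 2^v \<Longrightarrow> a i = 0" by (simp add: a_def cd_lo_def n_def)
  have p: "cd_mult v a (cd_conj v a) = (\<lambda>i. if i = 0 then sqs v a else 0)" by (rule Suc.IH)
  have q: "cd_mult v (cd_conj v (\<lambda>i. - b i)) b = (\<lambda>i. if i = 0 then - sqs v b else 0)"
  proof -
    have cc: "cd_conj v (cd_conj v b) = b" using conj_conj[of v b] bs by blast
    have "cd_mult v (cd_conj v b) b = (\<lambda>i. if i = 0 then sqs v b else 0)"
      using Suc.IH[of "cd_conj v b"] unfolding cc sqs_conj .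
    then show ?thesis unfolding conj_neg mult_negL by (auto simp: fun_eq_iff)
  qed
  have r: "cd_mult v (\<lambda>i. - b i) a = (\<lambda>i. - cd_mult v b a i)" by (rule mult_negL)
  have s: "cd_mult v b (cd_conj v (cd_conj v a)) = cd_mult v b a"
  proof -
    have cc: "cd_conj v (cd_conj v a) = a" using conj_conj[of v a] as by blast
    show ?thesis unfolding cc ..
  qed
  have sq: "sqs (Suc v) x = sqs v a + sqs v b"
  proof -
    have e: "(2::nat)^Suc v = 2^v + 2^v" by simp
    show ?thesis unfolding sqs_def e sum_split2 a_def b_def n_def
      by (simp add: cd_lo_def cd_hi_def)
  qed
  show ?case
    unfolding cd_mult.simps Let_def n_def[symmetric] lo_conj[of v, folded n_def] hi_conj[of v, folded n_def]
      a_def[symmetric] b_def[symmetric] p q r s sq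
    using n by (auto simp: cd_pair_def fun_eq_iff)
qed

lemma imag_conj: "x \<in> cd_imag v \<Longrightarrow> cd_conj v x = (\<lambda>i. - x i)"
  by (auto simp: cd_imag_def cd_elems_def cd_conj_def fun_eq_iff)

lemma imag_sq: "x \<in> cd_imag v \<Longrightarrow> cd_mult v x x = (\<lambda>i. if i = 0 then - sqs v x else 0)"
proof -
  assume a: "x \<in> cd_imag v"
  show ?thesis using mult_conj[of v x, unfolded imag_conj[OF a] mult_negR]
    by (auto simp: fun_eq_iff split: if_splits)
qed

lemma imag_add: "x \<in> cd_imag v \<Longrightarrow> y \<in> cd_imag v \<Longrightarrow> (\<lambda>i. x i + y i) \<in> cd_imag v"
  by (auto simp: cd_imag_def cd_elems_def)

lemma imag_anti: assumes "x \<in> cd_imag v" "y \<in> cd_imag v"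
  shows "(\<lambda>i. cd_mult v x y i + cd_mult v y x i) = (\<lambda>i. if i = 0 then - 2 * ips v x y else 0)"
proof -
  have h: "cd_mult v (\<lambda>i. x i + y i) (\<lambda>i. x i + y i) = (\<lambda>i. if i = 0 then - sqs v (\<lambda>i. x i + y i) else 0)"
    using imag_sq[OF imag_add[OF assms]] .
  have s: "sqs v (\<lambda>i. x i + y i) = sqs v x + 2 * ips v x y + sqs v y"
    by (simp add: sqs_def ips_def algebra_simps sum.distrib sum_distrib_left)
  show ?thesis
  proof (rule ext)
    fix i
    have "cd_mult v (\<lambda>i. x i + y i) (\<lambda>i. x i + y i) i = (if i = 0 then - sqs v (\<lambda>i. x i + y i) else 0)"
      using h by simp
    then show "cd_mult v x y i + cd_mult v y x i = (if i = 0 then - 2 * ips v x y else 0)"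
      unfolding mult_addL mult_addR imag_sq[OF assms(1)] imag_sq[OF assms(2)] s
      by (cases "i = 0") auto
  qed
qed

lemma one_mult: "cd_mult v cd_one y = (\<lambda>i. if i < 2^v then y i else 0) \<and>
   cd_mult v y cd_one = (\<lambda>i. if i < 2^v then y i else 0)"
proof (induction v arbitrary: y)
  case 0
  then show ?case by (auto simp: cd_one_def)
next
  case (Suc v)
  have lo1: "cd_lo (2^v) cd_one = cd_one" and hi1: "cd_hi (2^v) cd_one = (\<lambda>i. 0)"
    and c1: "cd_conj v cd_one = cd_one" and c0: "cd_conj v (\<lambda>i. 0) = (\<lambda>i. 0)"
    by (auto simp: cd_lo_def cd_hi_def cd_one_def cd_conj_def fun_eq_iff)
  show ?case
    unfolding cd_mult.simps Let_def lo1 hi1 c1 Suc.IH[THEN conjunct1] Suc.IH[THEN conjunct2] c0 mult_0L mult_0R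
    by (auto simp: cd_pair_def cd_lo_def cd_hi_def cd_conj_def fun_eq_iff)
qed

lemma norm_sqs: "cd_norm v x = sqrt (sqs v x)"
  unfolding cd_norm_def mult_conj by simp

lemma inner_ips: "cd_inner v x y = ips v x y"
  unfolding cd_inner_def mult_re ips_def
  using conj_sum[of v y x] by (simp add: cd_conj_def mult.commute)

lemma imag_trunc: "x \<in> cd_imag v \<Longrightarrow> (if i < 2^v then x i else 0) = x i"
  by (auto simp: cd_imag_def cd_elems_def)

lemma anti_exp:
  assumes X: "X \<in> cd_imag v" and Y: "Y \<in> cd_imag v"
  shows "cd_anticomm v (\<lambda>i. ca * cd_one i + u * X i) (\<lambda>i. cb * cd_one i + w * Y i) =
    (\<lambda>i. (2*ca*cb - 2*u*w*ips v X Y) * cd_one i + 2*ca*w*Y i + 2*cb*u*X i)"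
proof (rule ext)
  fix i
  have a: "cd_mult v X Y i + cd_mult v Y X i = (if i = 0 then - 2 * ips v X Y else 0)"
    using fun_cong[OF imag_anti[OF X Y], of i] by simp
  have a2: "u*(w*cd_mult v X Y i) + u*(w*cd_mult v Y X i) = u*w*(if i = 0 then - 2 * ips v X Y else 0)"
  proof -
    have "u*(w*cd_mult v X Y i) + u*(w*cd_mult v Y X i) = u*w*(cd_mult v X Y i + cd_mult v Y X i)"
      by (simp add: algebra_simps)
    then show ?thesis using a by simp
  qed
  show "cd_anticomm v (\<lambda>i. ca * cd_one i + u * X i) (\<lambda>i. cb * cd_one i + w * Y i) i =
    (2*ca*cb - 2*u*w*ips v X Y) * cd_one i + 2*ca*w*Y i + 2*cb*u*X i"
    unfolding cd_anticomm_def mult_lin[THEN conjunct1] mult_lin[THEN conjunct2]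
      one_mult[THEN conjunct1] one_mult[THEN conjunct2] imag_trunc[OF X] imag_trunc[OF Y]
    using a2 by (cases "i = 0") (simp_all add: cd_one_def algebra_simps)
qed

lemma exp_form: "cd_exp v M = (\<lambda>i. cos (cd_norm v M) * cd_one i + (sin (cd_norm v M) / cd_norm v M) * M i)"
  by (auto simp: cd_exp_def cd_one_def fun_eq_iff)

lemma cos_odd: "cos (pi/2 + pi * real k) = 0"
proof -
  have "sin (pi * real k) = 0" using sin_npi[of k] by (simp add: mult.commute)
  then show ?thesis by (simp add: cos_add)
qed

lemma sqs_nonneg: "sqs v x \<ge> 0"
  unfolding sqs_def by (rule sum_nonneg) simp

lemma cos0_form: assumes "0 \<le> a" "cos a = 0" shows "\<exists>k::nat. a = pi/2 + pi * real k"
proof -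
  obtain n where n: "odd n" "a = real n * (pi/2)" using cos_zero_lemma[OF assms] by blast
  then obtain k where "n = 2*k+1" by (metis oddE)
  then show ?thesis using n by (intro exI[of _ k]) (simp add: algebra_simps)
qed

theorem corollary13:
  fixes v :: nat and M N M1 M2 N1 N2 :: "nat \<Rightarrow> real" and \<alpha> \<beta> :: real
  assumes "v \<ge> 2"
    and "M \<in> cd_imag v" and "N \<in> cd_imag v"
    and "N = (\<lambda>i. N1 i + N2 i)" and "N1 = (\<lambda>i. \<beta> * M i)" and "cd_inner v N2 M = 0"
    and "M = (\<lambda>i. M1 i + M2 i)" and "M1 = (\<lambda>i. \<alpha> * N i)" and "cd_inner v M2 N = 0"
  shows "cd_anticomm v (cd_exp v M) (cd_exp v N) = (\<lambda>i. 0) \<longleftrightarrow>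
    (\<exists>(l::nat) (k::nat).
       (cd_norm v N2 = pi/2 + pi * real l \<and> N1 = (\<lambda>i. 0) \<and> cd_norm v M = pi/2 + pi * real k) \<or>
       (cd_norm v M2 = pi/2 + pi * real k \<and> M1 = (\<lambda>i. 0) \<and> cd_norm v N = pi/2 + pi * real l))"
proof -
  have Mi: "M \<in> cd_imag v" and Ni: "N \<in> cd_imag v" using assms(2,3) by auto
  have M0: "M 0 = 0" and N0: "N 0 = 0" using Mi Ni by (auto simp: cd_imag_def)
  have N2e: "N2 = (\<lambda>i. N i - \<beta> * M i)" using assms(4,5) by (auto simp: fun_eq_iff)
  have M2e: "M2 = (\<lambda>i. M i - \<alpha> * N i)" using assms(7,8) by (auto simp: fun_eq_iff)
  define a where "a = cd_norm v M"
  define b where "b = cd_norm v N"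
  define u where "u = sin a / a"
  define w where "w = sin b / b"
  define ip where "ip = ips v M N"
  have ipsym: "ips v N M = ip" unfolding ip_def ips_def by (simp add: mult.commute)
  have a_def2: "a = sqrt (sqs v M)" and b_def2: "b = sqrt (sqs v N)"
    unfolding a_def b_def norm_sqs by auto
  have a2: "a^2 = sqs v M" and b2: "b^2 = sqs v N"
    using a_def2 b_def2 sqs_nonneg[of v M] sqs_nonneg[of v N] by auto
  have a_ge: "a \<ge> 0" and b_ge: "b \<ge> 0" using a_def2 b_def2 sqs_nonneg[of v M] sqs_nonneg[of v N] by auto
  have ua: "u * a = sin a" unfolding u_def by (cases "a = 0") auto
  have wb: "w * b = sin b" unfolding w_def by (cases "b = 0") auto
  have "ips v N2 M = 0" using assms(6) inner_ips by simp
  moreover have "ips v N2 M = ips v N M - \<beta> * sqs v M"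
    unfolding N2e ips_def sqs_def by (simp add: sum_subtractf sum_distrib_left algebra_simps)
  ultimately have E1: "ip = \<beta> * sqs v M" using ipsym by simp
  have "ips v M2 N = 0" using assms(9) inner_ips by simp
  moreover have "ips v M2 N = ips v M N - \<alpha> * sqs v N"
    unfolding M2e ips_def sqs_def by (simp add: sum_subtractf sum_distrib_left algebra_simps)
  ultimately have E2: "ip = \<alpha> * sqs v N" unfolding ip_def by simp
  have key: "cd_anticomm v (cd_exp v M) (cd_exp v N) =
    (\<lambda>i. (2*cos a*cos b - 2*u*w*ip) * cd_one i + 2*cos a*w*N i + 2*cos b*u*M i)"
    unfolding exp_form a_def[symmetric] b_def[symmetric] u_def[symmetric] w_def[symmetric] ip_def
    by (rule anti_exp[OF Mi Ni])
  show ?thesis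
  proof
    assume H: "cd_anticomm v (cd_exp v M) (cd_exp v N) = (\<lambda>i. 0)"
    have H': "\<And>i. (2*cos a*cos b - 2*u*w*ip) * cd_one i + 2*cos a*w*N i + 2*cos b*u*M i = 0"
      using fun_cong[OF H[unfolded key]] by simp
    have C0: "cos a * cos b = u * w * ip" using H'[of 0] M0 N0 by (simp add: cd_one_def)
    have F: "cos a * w * N i = - (cos b * u * M i)" for i
    proof (cases "i = 0")
      case True then show ?thesis using M0 N0 by simp
    next
      case False then show ?thesis using H'[of i] by (simp add: cd_one_def)
    qed
    have S1: "cos a * w * ip = - (cos b * u * sqs v M)"
    proof -
      have "cos a * w * ip = (\<Sum>i<2^v. M i * (cos a * w * N i))"
        unfolding ip_def ips_def sum_distrib_left by (simp add: algebra_simps)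
      also have "\<dots> = (\<Sum>i<2^v. - (cos b * u) * (M i * M i))" unfolding F by (simp add: algebra_simps)
      also have "\<dots> = - (cos b * u * sqs v M)" unfolding sqs_def sum_distrib_left[symmetric] by simp
      finally show ?thesis .
    qed
    have S2: "cos b * u * ip = - (cos a * w * sqs v N)"
    proof -
      have F2: "cos b * u * M i = - (cos a * w * N i)" for i using F[of i] by simp
      have "cos b * u * ip = (\<Sum>i<2^v. N i * (cos b * u * M i))"
        unfolding ip_def ips_def sum_distrib_left by (simp add: algebra_simps)
      also have "\<dots> = (\<Sum>i<2^v. - (cos a * w) * (N i * N i))" unfolding F2 by (simp add: algebra_simps)
      also have "\<dots> = - (cos a * w * sqs v N)" unfolding sqs_def sum_distrib_left[symmetric] by simp
      finally show ?thesis .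
    qed
    have ea: "cos a * (cos a * cos b) = - cos b * (sin a)^2"
    proof -
      have "cos a * (cos a * cos b) = u * (cos a * w * ip)" using C0 by (simp add: algebra_simps)
      also have "\<dots> = - cos b * (u * a)^2" using S1 a2 by (simp add: algebra_simps power2_eq_square)
      also have "\<dots> = - cos b * (sin a)^2" unfolding ua ..
      finally show ?thesis .
    qed
    have "cos b = cos b * (cos a ^ 2 + sin a ^ 2)" by simp
    also have "\<dots> = cos a * (cos a * cos b) + cos b * (sin a)^2" by algebra
    also have "\<dots> = 0" using ea by simp
    finally have cb: "cos b = 0" .
    have eb: "cos b * (cos a * cos b) = - cos a * (sin b)^2"
    proof -
      have "cos b * (cos a * cos b) = w * (cos b * u * ip)" using C0 by (simp add: algebra_simps)
      also have "\<dots> = - cos a * (w * b)^2" using S2 b2 by (simp add: algebra_simps power2_eq_square)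
      also have "\<dots> = - cos a * (sin b)^2" unfolding wb ..
      finally show ?thesis .
    qed
    have "cos a = cos a * (cos b ^ 2 + sin b ^ 2)" by simp
    also have "\<dots> = cos b * (cos a * cos b) + cos a * (sin b)^2" by algebra
    also have "\<dots> = 0" using eb by simp
    finally have ca: "cos a = 0" .
    have sa: "sin a \<noteq> 0" using ca sin_cos_squared_add[of a] by auto
    have sb: "sin b \<noteq> 0" using cb sin_cos_squared_add[of b] by auto
    have an: "a \<noteq> 0" using sa by auto
    have bn: "b \<noteq> 0" using sb by auto
    have "u \<noteq> 0" "w \<noteq> 0" using sa sb an bn unfolding u_def w_def by auto
    then have ip0: "ip = 0" using C0 ca by simp
    have "sqs v M \<noteq> 0" using an a2 by auto
    then have beta: "\<beta> = 0" using E1 ip0 by simp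
    have N1z: "N1 = (\<lambda>i. 0)" using assms(5) beta by simp
    have N2N: "N2 = N" using N2e beta by simp
    obtain k where k: "a = pi/2 + pi * real k" using cos0_form[OF a_ge ca] by blast
    obtain l where l: "b = pi/2 + pi * real l" using cos0_form[OF b_ge cb] by blast
    show "\<exists>(l::nat) (k::nat).
       (cd_norm v N2 = pi/2 + pi * real l \<and> N1 = (\<lambda>i. 0) \<and> cd_norm v M = pi/2 + pi * real k) \<or>
       (cd_norm v M2 = pi/2 + pi * real k \<and> M1 = (\<lambda>i. 0) \<and> cd_norm v N = pi/2 + pi * real l)"
      using k l N1z N2N unfolding a_def b_def by (intro exI[of _ l] exI[of _ k] disjI1) simp
  next
    assume "\<exists>(l::nat) (k::nat).
       (cd_norm v N2 = pi/2 + pi * real l \<and> N1 = (\<lambda>i. 0) \<and> cd_norm v M = pi/2 + pi * real k) \<or>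
       (cd_norm v M2 = pi/2 + pi * real k \<and> M1 = (\<lambda>i. 0) \<and> cd_norm v N = pi/2 + pi * real l)"
    then obtain l k :: nat where R:
       "(cd_norm v N2 = pi/2 + pi * real l \<and> N1 = (\<lambda>i. 0) \<and> cd_norm v M = pi/2 + pi * real k) \<or>
       (cd_norm v M2 = pi/2 + pi * real k \<and> M1 = (\<lambda>i. 0) \<and> cd_norm v N = pi/2 + pi * real l)"
      by blast
    have zero: "cos a = 0 \<and> cos b = 0 \<and> ip = 0"
      using R
    proof
      assume h: "cd_norm v N2 = pi/2 + pi * real l \<and> N1 = (\<lambda>i. 0) \<and> cd_norm v M = pi/2 + pi * real k"
      have zf: "(\<lambda>i. \<beta> * M i) = (\<lambda>i. 0)" using h assms(5) by simp
      have z: "\<And>i. \<beta> * M i = 0" using fun_cong[OF zf] by simp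
      have "\<beta> * sqs v M = (\<Sum>i<(2::nat)^v. 0)" unfolding sqs_def sum_distrib_left
        by (rule sum.cong[OF refl]) (simp only: mult.assoc[symmetric] z mult_zero_left)
      then have "\<beta> * sqs v M = 0" by simp
      moreover have "N = N2" using h assms(4) by simp
      ultimately show ?thesis using h E1 cos_odd unfolding a_def b_def by simp
    next
      assume h: "cd_norm v M2 = pi/2 + pi * real k \<and> M1 = (\<lambda>i. 0) \<and> cd_norm v N = pi/2 + pi * real l"
      have zf: "(\<lambda>i. \<alpha> * N i) = (\<lambda>i. 0)" using h assms(8) by simp
      have z: "\<And>i. \<alpha> * N i = 0" using fun_cong[OF zf] by simp
      have "\<alpha> * sqs v N = (\<Sum>i<(2::nat)^v. 0)" unfolding sqs_def sum_distrib_left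
        by (rule sum.cong[OF refl]) (simp only: mult.assoc[symmetric] z mult_zero_left)
      then have "\<alpha> * sqs v N = 0" by simp
      moreover have "M = M2" using h assms(7) by simp
      ultimately show ?thesis using h E2 cos_odd unfolding a_def b_def by simp
    qed
    show "cd_anticomm v (cd_exp v M) (cd_exp v N) = (\<lambda>i. 0)"
      unfolding key using zero by simp
  qed
qed

end
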